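(* Let $d\geq1$ and $T\geq2$ be integers, let $X=(X_t)_{t=1}^T$, $X_t=(X_{t,j})_{j=1}^d$, be the canonical process on $(\mathbb{R}^d)^T$, and let $P$ be a probability measure on $(\mathbb{R}^d)^T$ such that, denoting by $\mu_{t,j}$ the law of $X_{t,j}$ under $P$, no $\mu_{t,j}$ is a Dirac measure. Suppose that $P$ is equivalent (has the same null sets as) the product measure $\bigotimes_{t=1}^T\bigotimes_{j=1}^d\mu_{t,j}$. Then the set of semistatic strategies is closed under $P$-a.s. convergence. Moreover, uniqueness and convergence of portfolio positions hold.
   Context: A semistatic strategy is a random variable $V$ with $V=\sum_{t=1}^{T-1}\sum_{j=1}^d\hat h_{t,j}(X_1,\dots,X_t)(X_{t+1,j}-X_{t,j})+\sum_{j=1}^d\hat g_j(X_{T,j})$ $P$-a.s. for some real-valued measurable functions $\hat h_{t,j}$ and $\hat g_j$. Writing $h_{t,j}:=\hat h_{t,j}(X_1,\dots,X_t)$ and $g_j:=\hat g_j(X_{T,j})$, the pair $(h,g)$ is a portfolio position of $V$. A normalization is the choice of an anchor point $x^0\in(\mathbb{R}^d)^T$ and the requirement $\hat g_j(x^0_{T,j})=0$ for $j=2,\dots,d$. Uniqueness of portfolio positions holds if for any semistatic strategy $V$, after such a normalization, the portfolio position $(h,g)$ is uniquely determined $P$-a.s. Convergence of portfolio positions holds if, after such a normalization, for any semistatic strategies $V^{(n)}$ converging $P$-a.s., the corresponding portfolio positions $(h^{(n)},g^{(n)})$ also converge $P$-a.s. *)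

theory Defs
  imports "HOL-Probability.Probability"
begin

text \<open>Paths: x t j is the value X_{t+1,j+1} (0-based time t < T and asset j < d).\<close>

definition canon_space :: "nat \<Rightarrow> nat \<Rightarrow> (nat \<Rightarrow> nat \<Rightarrow> real) measure" where
  "canon_space d T = PiM {..<T} (\<lambda>_. PiM {..<d} (\<lambda>_. lborel))"

text \<open>Space of path segments up to (0-based) time t, i.e. of (X_1,...,X_{t+1}).\<close>
definition past_space :: "nat \<Rightarrow> nat \<Rightarrow> (nat \<Rightarrow> nat \<Rightarrow> real) measure" where
  "past_space d t = PiM {..t} (\<lambda>_. PiM {..<d} (\<lambda>_. lborel))"

definition marginal :: "(nat \<Rightarrow> nat \<Rightarrow> real) measure \<Rightarrow> nat \<Rightarrow> nat \<Rightarrow> real measure" where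
  "marginal P t j = distr P lborel (\<lambda>x. x t j)"

definition marginal_product :: "nat \<Rightarrow> nat \<Rightarrow> (nat \<Rightarrow> nat \<Rightarrow> real) measure \<Rightarrow> (nat \<Rightarrow> nat \<Rightarrow> real) measure" where
  "marginal_product d T P = PiM {..<T} (\<lambda>t. PiM {..<d} (\<lambda>j. marginal P t j))"

definition is_portfolio_position ::
  "nat \<Rightarrow> nat \<Rightarrow> (nat \<Rightarrow> nat \<Rightarrow> real) measure \<Rightarrow> ((nat \<Rightarrow> nat \<Rightarrow> real) \<Rightarrow> real)
   \<Rightarrow> (nat \<Rightarrow> nat \<Rightarrow> (nat \<Rightarrow> nat \<Rightarrow> real) \<Rightarrow> real) \<Rightarrow> (nat \<Rightarrow> real \<Rightarrow> real) \<Rightarrow> bool" where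
  "is_portfolio_position d T P V hh gg \<longleftrightarrow>
     (\<forall>t<T - 1. \<forall>j<d. hh t j \<in> borel_measurable (past_space d t)) \<and>
     (\<forall>j<d. gg j \<in> borel_measurable borel) \<and>
     (AE x in P. V x = (\<Sum>t<T - 1. \<Sum>j<d. hh t j (restrict x {..t}) * (x (Suc t) j - x t j))
                        + (\<Sum>j<d. gg j (x (T - 1) j)))"

definition semistatic ::
  "nat \<Rightarrow> nat \<Rightarrow> (nat \<Rightarrow> nat \<Rightarrow> real) measure \<Rightarrow> ((nat \<Rightarrow> nat \<Rightarrow> real) \<Rightarrow> real) \<Rightarrow> bool" where
  "semistatic d T P V \<longleftrightarrow> V \<in> borel_measurable P \<and> (\<exists>hh gg. is_portfolio_position d T P V hh gg)"

end

theory Submission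
  imports Defs
begin

lemma conv_two_points:
  fixes a b :: "nat \<Rightarrow> real"
  assumes "convergent (\<lambda>n. a n * u1 + b n)" "convergent (\<lambda>n. a n * u2 + b n)" "u1 \<noteq> u2"
  shows "convergent a \<and> convergent b"
proof -
  have d: "convergent (\<lambda>n. (a n * u1 + b n) - (a n * u2 + b n))"
    using assms by (intro convergent_diff)
  have "(\<lambda>n. (a n * u1 + b n) - (a n * u2 + b n)) = (\<lambda>n. a n * (u1 - u2))"
    by (auto simp: algebra_simps)
  with d have "convergent (\<lambda>n. a n * (u1 - u2))" by simp
  then have ca: "convergent a" using assms(3) convergent_mult_const_right_iff[of "u1 - u2" a] by simp
  then have "convergent (\<lambda>n. a n * u1)" using convergent_mult_const_right_iff[of u1 a]
    by (cases "u1 = 0") (auto simp: convergent_const)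
  then have "convergent (\<lambda>n. (a n * u1 + b n) - a n * u1)" using assms(1) by (intro convergent_diff)
  then show ?thesis using ca by simp
qed

lemma conv_scale: "convergent (a::nat \<Rightarrow> real) \<Longrightarrow> convergent (\<lambda>n. a n * u)"
  using convergent_mult_const_right_iff[of u a] by (cases "u = 0") (auto simp: convergent_const)

lemma AE_exists:
  assumes "prob_space M" "AE x in M. P x"
  shows "\<exists>x\<in>space M. P x"
proof (rule ccontr)
  assume na: "\<not> ?thesis"
  have "AE x in M. False" using AE_conjI[OF assms(2) AE_space] by (rule eventually_mono) (use na in auto)
  then show False using assms(1) prob_space.AE_False by blast
qed

lemma AE_nondirac:
  fixes \<mu> :: "real measure"
  assumes "prob_space \<mu>" "sets \<mu> = sets borel" "\<mu> \<noteq> return lborel a" "AE u in \<mu>. P u"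
  shows "\<exists>u. u \<noteq> a \<and> P u"
proof (rule ccontr)
  assume na: "\<not> ?thesis"
  have ae: "AE u in \<mu>. u = a" using assms(4) by (rule eventually_mono) (use na in auto)
  interpret prob_space \<mu> by fact
  have "\<mu> = return lborel a"
  proof (rule measure_eqI)
    show "sets \<mu> = sets (return lborel a)" using assms(2) by simp
    fix A assume A: "A \<in> sets \<mu>"
    have sp: "space \<mu> = UNIV" using assms(2) sets_eq_imp_space_eq by fastforce
    show "emeasure \<mu> A = emeasure (return lborel a) A"
    proof (cases "a \<in> A")
      case True
      have "emeasure \<mu> A = emeasure \<mu> (space \<mu>)"
        by (rule emeasure_eq_AE) (use ae True A in auto)
      then show ?thesis using True A assms(2) by (simp add: emeasure_space_1)
    next
      case False
      have "emeasure \<mu> A = emeasure \<mu> {}"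
        by (rule emeasure_eq_AE) (use ae False A in auto)
      then show ?thesis using False A assms(2) by simp
    qed
  qed
  with assms(3) show False by simp
qed

lemma AE_two_points:
  fixes \<mu> :: "real measure"
  assumes "prob_space \<mu>" "sets \<mu> = sets borel" "\<forall>c. \<mu> \<noteq> return lborel c" "AE u in \<mu>. P u"
  shows "\<exists>u1 u2. u1 \<noteq> u2 \<and> P u1 \<and> P u2"
proof -
  obtain u1 where "P u1" using AE_exists[OF assms(1,4)] by auto
  moreover obtain u2 where "u2 \<noteq> u1" "P u2" using AE_nondirac[OF assms(1,2) _ assms(4), of u1] assms(3) by auto
  ultimately show ?thesis by blast
qed

lemma split_AE:
  fixes M :: "'i \<Rightarrow> 'a measure"
  assumes prob: "\<And>j. prob_space (M j)"
  assumes ae: "AE z in PiM (insert i I) M. P z"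
  shows "AE u in M i. AE X in PiM I M. P (X(i := u))"
    and "AE X in PiM I M. AE u in M i. P (X(i := u))"
proof -
  interpret Mi: prob_space "M i" by (rule prob)
  interpret PI: prob_space "PiM I M" by (intro prob_space_PiM prob)
  interpret pair_prob_space "M i" "PiM I M" by unfold_locales
  interpret sw: pair_prob_space "PiM I M" "M i" by unfold_locales
  have D: "distr (M i \<Otimes>\<^sub>M PiM I M) (PiM (insert i I) M) (\<lambda>(x, X). X(i := x)) = PiM (insert i I) M"
    by (rule distr_pair_PiM_eq_PiM) (auto intro: prob)
  have meas: "(\<lambda>(x, X). X(i := x)) \<in> measurable (M i \<Otimes>\<^sub>M PiM I M) (PiM (insert i I) M)"
  proof -
    have "(\<lambda>w. (snd w)(i := fst w)) \<in> measurable (M i \<Otimes>\<^sub>M PiM I M) (PiM (insert i I) M)"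
      by (rule measurable_fun_upd[where J=I]) auto
    then show ?thesis by (simp add: case_prod_beta')
  qed
  have ae2: "AE w in M i \<Otimes>\<^sub>M PiM I M. P ((\<lambda>(x, X). X(i := x)) w)"
    by (rule AE_distrD[OF meas]) (subst D, rule ae)
  then show "AE u in M i. AE X in PiM I M. P (X(i := u))"
    using AE_pair[OF ae2] by simp
  have ae3: "AE w in PiM I M \<Otimes>\<^sub>M M i. P ((\<lambda>(x, X). X(i := x)) ((\<lambda>(x, y). (y, x)) w))"
    by (rule AE_distrD[OF measurable_pair_swap']) (subst distr_pair_swap[symmetric], rule ae2)
  show "AE X in PiM I M. AE u in M i. P (X(i := u))"
    using sw.AE_pair[OF ae3] by simp
qed

lemma sep_conv:
  fixes \<nu> :: "nat \<Rightarrow> real measure" and f :: "nat \<Rightarrow> nat \<Rightarrow> real \<Rightarrow> real"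
  assumes prob: "\<And>j. prob_space (\<nu> j)"
  shows "AE y in PiM {..<d} \<nu>. convergent (\<lambda>n. K n + (\<Sum>j<d. f n j (y j))) \<Longrightarrow>
    \<exists>c. convergent (\<lambda>n. K n - (\<Sum>j<d. c n j)) \<and> (\<forall>j<d. AE u in \<nu> j. convergent (\<lambda>n. f n j u + c n j))"
proof (induction d arbitrary: K)
  case 0
  have "\<exists>x\<in>space (PiM {..<0::nat} \<nu>). convergent (\<lambda>n. K n + (\<Sum>j<0. f n j (x j)))"
    by (rule AE_exists[OF _ 0]) (intro prob_space_PiM prob)
  then have "convergent K" by simp
  then show ?case by (intro exI[of _ "\<lambda>n j. 0"]) simp
next
  case (Suc d)
  have eqs: "(\<Sum>j<Suc d. f n j ((X(d:=u)) j)) = (\<Sum>j<d. f n j (X j)) + f n d u" for X u n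
  proof -
    have "(\<Sum>j<d. f n j ((X(d:=u)) j)) = (\<Sum>j<d. f n j (X j))" by (rule sum.cong) auto
    then show ?thesis by (simp add: sum.lessThan_Suc)
  qed
  have ae0: "AE z in PiM (insert d {..<d}) \<nu>. convergent (\<lambda>n. K n + (\<Sum>j<Suc d. f n j (z j)))"
    using Suc.prems unfolding lessThan_Suc .
  note A1 = split_AE(1)[OF prob ae0, unfolded eqs]
  note A2 = split_AE(2)[OF prob ae0, unfolded eqs]
  obtain u0 where u0: "AE X in PiM {..<d} \<nu>. convergent (\<lambda>n. K n + ((\<Sum>j<d. f n j (X j)) + f n d u0))"
    using AE_exists[OF prob A1] by auto
  have "AE X in PiM {..<d} \<nu>. convergent (\<lambda>n. (K n + f n d u0) + (\<Sum>j<d. f n j (X j)))"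
    using u0 by (rule eventually_mono) (simp add: ac_simps)
  from Suc.IH[OF this] obtain c' where c': "convergent (\<lambda>n. (K n + f n d u0) - (\<Sum>j<d. c' n j))"
    "\<forall>j<d. AE u in \<nu> j. convergent (\<lambda>n. f n j u + c' n j)" by blast
  obtain X0 where X0: "AE u in \<nu> d. convergent (\<lambda>n. K n + ((\<Sum>j<d. f n j (X0 j)) + f n d u))"
    "convergent (\<lambda>n. K n + ((\<Sum>j<d. f n j (X0 j)) + f n d u0))"
    using AE_exists[OF prob_space_PiM[OF prob] AE_conjI[OF A2 u0]] by auto
  define c where "c = (\<lambda>n j. if j = d then - f n d u0 else c' n j)"
  have sc: "(\<Sum>j<Suc d. c n j) = (\<Sum>j<d. c' n j) - f n d u0" for n
  proof -
    have "(\<Sum>j<d. c n j) = (\<Sum>j<d. c' n j)" by (rule sum.cong) (auto simp: c_def)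
    then show ?thesis by (simp add: sum.lessThan_Suc c_def)
  qed
  have "K n - (\<Sum>j<Suc d. c n j) = (K n + f n d u0) - (\<Sum>j<d. c' n j)" for n
    using sc[of n] by (simp add: algebra_simps)
  then have "(\<lambda>n. K n - (\<Sum>j<Suc d. c n j)) = (\<lambda>n. (K n + f n d u0) - (\<Sum>j<d. c' n j))"
    by (intro ext)
  then have "convergent (\<lambda>n. K n - (\<Sum>j<Suc d. c n j))"
    using c'(1) by simp
  moreover have "\<forall>j<Suc d. AE u in \<nu> j. convergent (\<lambda>n. f n j u + c n j)"
  proof (intro allI impI)
    fix j assume j: "j < Suc d"
    show "AE u in \<nu> j. convergent (\<lambda>n. f n j u + c n j)"
    proof (cases "j = d")
      case True
      have "AE u in \<nu> d. convergent (\<lambda>n. f n d u + c n d)" using X0(1)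
      proof (rule eventually_mono)
        fix u assume "convergent (\<lambda>n. K n + ((\<Sum>j<d. f n j (X0 j)) + f n d u))"
        from convergent_diff[OF this X0(2)]
        show "convergent (\<lambda>n. f n d u + c n d)" by (simp add: c_def)
      qed
      then show ?thesis using True by (simp only:)
    next
      case False
      then have "j < d" using j by simp
      then show ?thesis using c'(2) False by (simp add: c_def)
    qed
  qed
  ultimately show ?case by blast
qed

lemma restrict_AE:
  fixes M :: "'i \<Rightarrow> 'a measure"
  assumes prob: "\<And>i. prob_space (M i)" and JI: "J \<subseteq> I" and fin: "finite I"
  assumes ae: "AE x in PiM J M. P x"
  shows "AE z in PiM I M. P (restrict z J)"
proof -
  interpret product_prob_space M
    by (simp add: product_prob_space_def product_prob_space_axioms_def product_sigma_finite_def prob prob_space_imp_sigma_finite)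
  show ?thesis
    by (rule AE_distrD[OF measurable_restrict_subset[OF JI]]) (subst distr_restrict[OF JI fin, symmetric], rule ae)
qed

lemma restrict_restrict_le: "t \<le> K \<Longrightarrow> restrict (restrict z {..<Suc K}) {..t} = restrict z {..t}"
  by (auto simp: restrict_def fun_eq_iff)

lemma core:
  fixes d K :: nat and \<mu> :: "nat \<Rightarrow> nat \<Rightarrow> real measure"
    and H :: "nat \<Rightarrow> nat \<Rightarrow> nat \<Rightarrow> (nat \<Rightarrow> nat \<Rightarrow> real) \<Rightarrow> real" and G :: "nat \<Rightarrow> nat \<Rightarrow> real \<Rightarrow> real"
  assumes prob: "\<And>t j. prob_space (\<mu> t j)" and sets: "\<And>t j. sets (\<mu> t j) = sets borel"
  shows "(\<And>t j c. t \<le> K \<Longrightarrow> j < d \<Longrightarrow> \<mu> t j \<noteq> return lborel c) \<Longrightarrow>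
    AE x in PiM {..<Suc K} (\<lambda>t. PiM {..<d} (\<mu> t)). convergent (\<lambda>n.
      (\<Sum>t<K. \<Sum>j<d. H n t j (restrict x {..t}) * (x (Suc t) j - x t j)) + (\<Sum>j<d. G n j (x K j))) \<Longrightarrow>
    (\<forall>t<K. \<forall>j<d. AE x in PiM {..<Suc K} (\<lambda>t. PiM {..<d} (\<mu> t)). convergent (\<lambda>n. H n t j (restrict x {..t}))) \<and>
    (\<exists>c. convergent (\<lambda>n. \<Sum>j<d. c n j) \<and> (\<forall>j<d. AE u in \<mu> K j. convergent (\<lambda>n. G n j u + c n j)))"
proof (induction K arbitrary: G)
  case 0
  have probM: "prob_space (PiM {..<d} (\<mu> t))" for t by (intro prob_space_PiM prob)
  have ae0: "AE x in PiM (insert 0 {}) (\<lambda>t. PiM {..<d} (\<mu> t)). convergent (\<lambda>n. (\<Sum>j<d. G n j (x 0 j)))"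
    using "0.prems"(2) unfolding lessThan_Suc lessThan_0 by simp
  obtain X0 :: "nat \<Rightarrow> nat \<Rightarrow> real" where X0: "AE u in PiM {..<d} (\<mu> 0). convergent (\<lambda>n. (\<Sum>j<d. G n j ((X0(0 := u)) 0 j)))"
    using AE_exists[OF prob_space_PiM[OF probM] split_AE(2)[OF probM ae0]] by (elim bexE)
  have "AE u in PiM {..<d} (\<mu> 0). convergent (\<lambda>n. 0 + (\<Sum>j<d. G n j (u j)))"
    using X0 by simp
  from sep_conv[OF prob this] obtain c where
    "convergent (\<lambda>n. 0 - (\<Sum>j<d. c n j))" "\<forall>j<d. AE u in \<mu> 0 j. convergent (\<lambda>n. G n j u + c n j)"
    by blast
  then show ?case using convergent_minus_iff[of "\<lambda>n. (\<Sum>j<d. c n j)"] by auto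
next
  case (Suc K)
  note nd = Suc.prems(1)
  have probM: "prob_space (PiM {..<d} (\<mu> t))" for t by (intro prob_space_PiM prob)
  define Wp where "Wp n x = (\<Sum>t<K. \<Sum>j<d. H n t j (restrict x {..t}) * (x (Suc t) j - x t j))" for n x
  define a where "a n j x = H n K j (restrict x {..K})" for n j x
  define Kx where "Kx n x = Wp n x - (\<Sum>j<d. a n j x * x K j)" for n x
  have E: "(\<Sum>t<Suc K. \<Sum>j<d. H n t j (restrict (x(Suc K := y)) {..t}) * ((x(Suc K := y)) (Suc t) j - (x(Suc K := y)) t j))
      + (\<Sum>j<d. G n j ((x(Suc K := y)) (Suc K) j))
      = Kx n x + (\<Sum>j<d. a n j x * y j + G n j (y j))" for n x y
  proof -
    have r: "restrict (x(Suc K := y)) {..t} = restrict x {..t}" if "t \<le> K" for t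
      using that by (auto simp: restrict_def fun_eq_iff)
    have s1: "(\<Sum>t<K. \<Sum>j<d. H n t j (restrict (x(Suc K := y)) {..t}) * ((x(Suc K := y)) (Suc t) j - (x(Suc K := y)) t j))
       = Wp n x" unfolding Wp_def
      by (rule sum.cong) (auto simp: r)
    have s2: "(\<Sum>j<d. H n K j (restrict (x(Suc K := y)) {..K}) * ((x(Suc K := y)) (Suc K) j - (x(Suc K := y)) K j))
       = (\<Sum>j<d. a n j x * y j) - (\<Sum>j<d. a n j x * x K j)"
      by (simp add: r a_def right_diff_distrib sum_subtractf)
    show ?thesis
      by (simp only: sum.lessThan_Suc s1 s2) (simp add: Kx_def sum.distrib)
  qed
  have ae1: "AE x in PiM (insert (Suc K) {..<Suc K}) (\<lambda>t. PiM {..<d} (\<mu> t)). convergent (\<lambda>n.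
      (\<Sum>t<Suc K. \<Sum>j<d. H n t j (restrict x {..t}) * (x (Suc t) j - x t j)) + (\<Sum>j<d. G n j (x (Suc K) j)))"
    using Suc.prems(2) unfolding lessThan_Suc[of "Suc K"] .
  define good where "good x \<longleftrightarrow> (AE y in PiM {..<d} (\<mu> (Suc K)). convergent (\<lambda>n. Kx n x + (\<Sum>j<d. a n j x * y j + G n j (y j))))" for x
  have aegood: "AE x in PiM {..<Suc K} (\<lambda>t. PiM {..<d} (\<mu> t)). good x"
    using split_AE(2)[OF probM ae1] unfolding E good_def .
  define Ok where "Ok x c \<longleftrightarrow> convergent (\<lambda>n. Kx n x - (\<Sum>j<d. c n j)) \<and>
      (\<forall>j<d. AE u in \<mu> (Suc K) j. convergent (\<lambda>n. (a n j x * u + G n j u) + c n j))" for x c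
  have exOk: "\<exists>c. Ok x c" if "good x" for x
  proof -
    have "AE y in PiM {..<d} (\<mu> (Suc K)). convergent (\<lambda>n. Kx n x + (\<Sum>j<d. (\<lambda>n j u. a n j x * u + G n j u) n j (y j)))"
      using that unfolding good_def by simp
    from sep_conv[OF prob this] show ?thesis unfolding Ok_def by simp
  qed
  define cx where "cx x = (SOME c. Ok x c)" for x
  have Okcx: "Ok x (cx x)" if "good x" for x
    unfolding cx_def using exOk[OF that] by (rule someI_ex)
  obtain xh where xh: "good xh"
    using AE_exists[OF prob_space_PiM[OF probM] aegood] by blast
  define \<alpha> where "\<alpha> n j = a n j xh" for n j
  define e where "e n j = cx xh n j" for n j
  have claim1: "convergent (\<lambda>n. a n j x - \<alpha> n j) \<and> convergent (\<lambda>n. cx x n j - e n j)"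
    if gx: "good x" and j: "j < d" for x j
  proof -
    have "AE u in \<mu> (Suc K) j. convergent (\<lambda>n. (a n j x * u + G n j u) + cx x n j) \<and>
        convergent (\<lambda>n. (a n j xh * u + G n j u) + cx xh n j)"
      using Okcx[OF gx] Okcx[OF xh] j unfolding Ok_def by (intro AE_conjI) auto
    from AE_two_points[OF prob sets _ this] nd[of "Suc K" j] j obtain u1 u2 where u12: "u1 \<noteq> u2"
      "convergent (\<lambda>n. (a n j x * u1 + G n j u1) + cx x n j)" "convergent (\<lambda>n. (a n j xh * u1 + G n j u1) + cx xh n j)"
      "convergent (\<lambda>n. (a n j x * u2 + G n j u2) + cx x n j)" "convergent (\<lambda>n. (a n j xh * u2 + G n j u2) + cx xh n j)"
      by auto
    have eq: "((a n j x * u + G n j u) + cx x n j) - ((a n j xh * u + G n j u) + cx xh n j)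
       = (a n j x - \<alpha> n j) * u + (cx x n j - e n j)" for n u
      by (simp add: \<alpha>_def e_def algebra_simps)
    show ?thesis
      using conv_two_points[OF _ _ u12(1), of "\<lambda>n. a n j x - \<alpha> n j" "\<lambda>n. cx x n j - e n j"]
        convergent_diff[OF u12(2,3)] convergent_diff[OF u12(4,5)] by (simp add: eq)
  qed
  define G' where "G' n j u = - \<alpha> n j * u - e n j" for n j u
  have claim2: "AE x in PiM {..<Suc K} (\<lambda>t. PiM {..<d} (\<mu> t)). convergent (\<lambda>n.
      (\<Sum>t<K. \<Sum>j<d. H n t j (restrict x {..t}) * (x (Suc t) j - x t j)) + (\<Sum>j<d. G' n j (x K j)))"
    using aegood
  proof (rule eventually_mono)
    fix x assume gx: "good x"
    have eq: "(\<Sum>t<K. \<Sum>j<d. H n t j (restrict x {..t}) * (x (Suc t) j - x t j)) + (\<Sum>j<d. G' n j (x K j))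
      = (Kx n x - (\<Sum>j<d. cx x n j)) + (\<Sum>j<d. (a n j x - \<alpha> n j) * x K j + (cx x n j - e n j))" for n
    proof -
      have 1: "(\<Sum>j<d. G' n j (x K j)) = - (\<Sum>j<d. \<alpha> n j * x K j) - (\<Sum>j<d. e n j)"
        by (simp add: G'_def sum_subtractf sum_negf)
      have 2: "(\<Sum>j<d. (a n j x - \<alpha> n j) * x K j + (cx x n j - e n j))
          = (\<Sum>j<d. a n j x * x K j) - (\<Sum>j<d. \<alpha> n j * x K j) + (\<Sum>j<d. cx x n j) - (\<Sum>j<d. e n j)"
        by (simp add: sum.distrib sum_subtractf left_diff_distrib)
      show ?thesis unfolding 1 2 Kx_def Wp_def by simp
    qed
    have c1: "convergent (\<lambda>n. Kx n x - (\<Sum>j<d. cx x n j))" using Okcx[OF gx] unfolding Ok_def by simp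
    have c2: "convergent (\<lambda>n. \<Sum>j<d. (a n j x - \<alpha> n j) * x K j + (cx x n j - e n j))"
      by (intro convergent_sum convergent_add conv_scale) (use claim1[OF gx] in auto)
    show "convergent (\<lambda>n. (\<Sum>t<K. \<Sum>j<d. H n t j (restrict x {..t}) * (x (Suc t) j - x t j)) + (\<Sum>j<d. G' n j (x K j)))"
      unfolding eq by (rule convergent_add[OF c1 c2])
  qed
  have ndK: "\<And>t j c. t \<le> K \<Longrightarrow> j < d \<Longrightarrow> \<mu> t j \<noteq> return lborel c" using nd by simp
  from Suc.IH[OF ndK claim2] obtain c' where
    hK: "\<forall>t<K. \<forall>j<d. AE x in PiM {..<Suc K} (\<lambda>t. PiM {..<d} (\<mu> t)). convergent (\<lambda>n. H n t j (restrict x {..t}))"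
    and c'1: "convergent (\<lambda>n. \<Sum>j<d. c' n j)"
    and c'2: "\<forall>j<d. AE u in \<mu> K j. convergent (\<lambda>n. G' n j u + c' n j)"
    by blast
  have conv\<alpha>: "convergent (\<lambda>n. \<alpha> n j) \<and> convergent (\<lambda>n. c' n j - e n j)" if j: "j < d" for j
  proof -
    from AE_two_points[OF prob sets _ c'2[rule_format, OF j]] nd[of K j] j obtain u1 u2 where
      u12: "u1 \<noteq> u2" "convergent (\<lambda>n. G' n j u1 + c' n j)" "convergent (\<lambda>n. G' n j u2 + c' n j)" by auto
    have eq: "G' n j u + c' n j = (- \<alpha> n j) * u + (c' n j - e n j)" for n u
      by (simp add: G'_def)
    from conv_two_points[of "\<lambda>n. - \<alpha> n j" u1 "\<lambda>n. c' n j - e n j" u2] u12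
    show ?thesis using convergent_minus_iff[of "\<lambda>n. \<alpha> n j"] by (simp add: eq)
  qed
  have part1: "\<forall>t<Suc K. \<forall>j<d. AE x in PiM {..<Suc (Suc K)} (\<lambda>t. PiM {..<d} (\<mu> t)). convergent (\<lambda>n. H n t j (restrict x {..t}))"
  proof (intro allI impI)
    fix t j assume t: "t < Suc K" and j: "j < d"
    have "AE x in PiM {..<Suc K} (\<lambda>t. PiM {..<d} (\<mu> t)). convergent (\<lambda>n. H n t j (restrict x {..t}))"
    proof (cases "t < K")
      case True then show ?thesis using hK j by blast
    next
      case False
      then have tK: "t = K" using t by simp
      show ?thesis using aegood
      proof (rule eventually_mono)
        fix x assume "good x"
        from claim1[OF this j] conv\<alpha>[OF j] have "convergent (\<lambda>n. (a n j x - \<alpha> n j) + \<alpha> n j)"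
          by (intro convergent_add) auto
        then show "convergent (\<lambda>n. H n t j (restrict x {..t}))" by (simp add: a_def tK)
      qed
    qed
    from restrict_AE[OF probM _ _ this, of "{..<Suc (Suc K)}"]
    show "AE x in PiM {..<Suc (Suc K)} (\<lambda>t. PiM {..<d} (\<mu> t)). convergent (\<lambda>n. H n t j (restrict x {..t}))"
      using t by (simp add: Int_absorb1 subset_eq)
  qed
  have part2: "convergent (\<lambda>n. \<Sum>j<d. e n j)"
  proof -
    have "convergent (\<lambda>n. (\<Sum>j<d. c' n j) - (\<Sum>j<d. c' n j - e n j))"
      by (rule convergent_diff[OF c'1 convergent_sum]) (use conv\<alpha> in auto)
    then show ?thesis by (simp add: sum_subtractf)
  qed
  have part3: "\<forall>j<d. AE u in \<mu> (Suc K) j. convergent (\<lambda>n. G n j u + e n j)"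
  proof (intro allI impI)
    fix j assume j: "j < d"
    have "AE u in \<mu> (Suc K) j. convergent (\<lambda>n. (a n j xh * u + G n j u) + cx xh n j)"
      using Okcx[OF xh] j unfolding Ok_def by auto
    then show "AE u in \<mu> (Suc K) j. convergent (\<lambda>n. G n j u + e n j)"
    proof (rule eventually_mono)
      fix u assume "convergent (\<lambda>n. (a n j xh * u + G n j u) + cx xh n j)"
      from convergent_diff[OF this conv_scale[OF conv\<alpha>[OF j, THEN conjunct1], of u]]
      show "convergent (\<lambda>n. G n j u + e n j)" by (simp add: \<alpha>_def e_def)
    qed
  qed
  show ?case using part1 part2 part3 by blast
qed

lemma AE_equiv_null:
  assumes "sets P = sets Q" "\<forall>A\<in>sets P. emeasure P A = 0 \<longleftrightarrow> emeasure Q A = 0"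
  shows "(AE x in P. \<phi> x) \<longleftrightarrow> (AE x in Q. \<phi> x)"
proof -
  have sp: "space P = space Q" using assms(1) by (rule sets_eq_imp_space_eq)
  have "null_sets P = null_sets Q" using assms by (auto simp: null_sets_def)
  then show ?thesis by (simp add: eventually_ae_filter sp)
qed

lemma meas_coord:
  assumes "sets P = sets (canon_space d T)" "t < T" "j < d"
  shows "(\<lambda>x. x t j) \<in> measurable P lborel"
proof -
  have "(\<lambda>x. x t) \<in> measurable (canon_space d T) (PiM {..<d} (\<lambda>_. lborel))"
    unfolding canon_space_def by (rule measurable_component_singleton) (use assms in simp)
  moreover have "(\<lambda>y. y j) \<in> measurable (PiM {..<d} (\<lambda>_. lborel)) (lborel :: real measure)"
    by (rule measurable_component_singleton) (use assms in simp)
  ultimately have m: "(\<lambda>x. x t j) \<in> measurable (canon_space d T) lborel"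
    using measurable_comp[of "\<lambda>x. x t" _ _ "\<lambda>y. y j"] by (simp add: comp_def)
  show ?thesis by (subst measurable_cong_sets[OF assms(1) refl]) (rule m)
qed

lemma part3:
  fixes d T :: nat and P :: "(nat \<Rightarrow> nat \<Rightarrow> real) measure"
  assumes "d \<ge> 1" and "T \<ge> 2"
    and "prob_space P"
    and "sets P = sets (canon_space d T)"
    and "\<forall>t<T. \<forall>j<d. \<forall>c. marginal P t j \<noteq> return lborel c"
    and "\<forall>A\<in>sets P. emeasure P A = 0 \<longleftrightarrow> emeasure (marginal_product d T P) A = 0"
    and pos: "\<forall>n. is_portfolio_position d T P (Vs n) (hhs n) (ggs n)"
    and cv: "AE x in P. convergent (\<lambda>n. Vs n x)"
  shows "\<exists>c :: nat \<Rightarrow> nat \<Rightarrow> real. (\<forall>n. (\<Sum>j<d. c n j) = 0) \<and>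
               (\<forall>t<T - 1. \<forall>j<d. AE x in P. convergent (\<lambda>n. hhs n t j (restrict x {..t}))) \<and>
               (\<forall>j<d. AE x in P. convergent (\<lambda>n. ggs n j (x (T - 1) j) + c n j))"
proof -
  define \<mu> where "\<mu> t j = (if t < T \<and> j < d then marginal P t j else return lborel 0)" for t j
  have meas: "\<And>t j. t < T \<Longrightarrow> j < d \<Longrightarrow> (\<lambda>x. x t j) \<in> measurable P lborel"
    using meas_coord[OF assms(4)] by blast
  have prob: "prob_space (\<mu> t j)" for t j
    using prob_space.prob_space_distr[OF assms(3) meas, of t j]
    by (auto simp: \<mu>_def marginal_def intro: prob_space_return)
  have sets: "sets (\<mu> t j) = sets borel" for t j
    by (auto simp: \<mu>_def marginal_def)
  have nd: "\<And>t j c. t \<le> T - 1 \<Longrightarrow> j < d \<Longrightarrow> \<mu> t j \<noteq> return lborel c"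
    using assms(2,5) by (auto simp: \<mu>_def)
  have Qeq: "PiM {..<T} (\<lambda>t. PiM {..<d} (\<mu> t)) = marginal_product d T P"
    unfolding marginal_product_def by (intro PiM_cong refl) (auto simp: \<mu>_def)
  have setsQ: "sets P = sets (PiM {..<T} (\<lambda>t. PiM {..<d} (\<mu> t)))"
    unfolding assms(4) canon_space_def
    by (intro sets_PiM_cong refl) (auto simp: sets)
  have AEeq: "(AE x in P. \<phi> x) \<longleftrightarrow> (AE x in PiM {..<T} (\<lambda>t. PiM {..<d} (\<mu> t)). \<phi> x)" for \<phi>
    by (rule AE_equiv_null[OF setsQ]) (use assms(6) in \<open>simp add: Qeq\<close>)
  have TT: "Suc (T - 1) = T" using assms(2) by simp
  have "AE x in P. \<forall>n. Vs n x = (\<Sum>t<T - 1. \<Sum>j<d. hhs n t j (restrict x {..t}) * (x (Suc t) j - x t j))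
                        + (\<Sum>j<d. ggs n j (x (T - 1) j))"
    using pos unfolding is_portfolio_position_def by (intro AE_all_countable[THEN iffD2]) blast
  with cv have "AE x in P. convergent (\<lambda>n. (\<Sum>t<T - 1. \<Sum>j<d. hhs n t j (restrict x {..t}) * (x (Suc t) j - x t j))
                        + (\<Sum>j<d. ggs n j (x (T - 1) j)))"
    by eventually_elim simp
  then have "AE x in PiM {..<Suc (T - 1)} (\<lambda>t. PiM {..<d} (\<mu> t)). convergent (\<lambda>n. (\<Sum>t<T - 1. \<Sum>j<d. hhs n t j (restrict x {..t}) * (x (Suc t) j - x t j))
                        + (\<Sum>j<d. ggs n j (x (T - 1) j)))"
    unfolding AEeq TT .
  from core[OF prob sets nd this] obtain c where
    h: "\<forall>t<T - 1. \<forall>j<d. AE x in PiM {..<Suc (T - 1)} (\<lambda>t. PiM {..<d} (\<mu> t)). convergent (\<lambda>n. hhs n t j (restrict x {..t}))"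
    and c1: "convergent (\<lambda>n. \<Sum>j<d. c n j)"
    and c2: "\<forall>j<d. AE u in \<mu> (T - 1) j. convergent (\<lambda>n. ggs n j u + c n j)"
    by blast
  have H: "\<forall>t<T - 1. \<forall>j<d. AE x in P. convergent (\<lambda>n. hhs n t j (restrict x {..t}))"
    using h unfolding AEeq TT .
  have G: "AE x in P. convergent (\<lambda>n. ggs n j (x (T - 1) j) + c n j)" if j: "j < d" for j
  proof -
    have "T - 1 < T" using assms(2) by simp
    have "AE u in distr P lborel (\<lambda>x. x (T - 1) j). convergent (\<lambda>n. ggs n j u + c n j)"
    proof -
      have "\<mu> (T - 1) j = distr P lborel (\<lambda>x. x (T - 1) j)"
        using j \<open>T - 1 < T\<close> by (simp add: \<mu>_def marginal_def)
      then show ?thesis using c2 j by metis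
    qed
    from AE_distrD[OF meas[OF \<open>T - 1 < T\<close> j] this] show ?thesis .
  qed
  define c' where "c' n j = c n j - (if j = 0 then (\<Sum>i<d. c n i) else 0)" for n j
  have "(\<Sum>j<d. c' n j) = 0" for n
    using assms(1) by (simp add: c'_def sum_subtractf)
  moreover have "\<forall>j<d. AE x in P. convergent (\<lambda>n. ggs n j (x (T - 1) j) + c' n j)"
  proof (intro allI impI)
    fix j assume j: "j < d"
    show "AE x in P. convergent (\<lambda>n. ggs n j (x (T - 1) j) + c' n j)"
      using G[OF j]
    proof (rule eventually_mono)
      fix x assume a: "convergent (\<lambda>n. ggs n j (x (T - 1) j) + c n j)"
      show "convergent (\<lambda>n. ggs n j (x (T - 1) j) + c' n j)"
      proof (cases "j = 0")
        case True
        from convergent_diff[OF a c1] show ?thesis by (simp add: c'_def True algebra_simps)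
      next
        case False then show ?thesis using a by (simp add: c'_def)
      qed
    qed
  qed
  ultimately show ?thesis using H by blast
qed

lemma AE_ball_lessThan:
  assumes "\<forall>t<(m::nat). AE x in M. Q t x"
  shows "AE x in M. \<forall>t<m. Q t x"
proof -
  have "\<forall>t. AE x in M. t < m \<longrightarrow> Q t x"
  proof
    fix t show "AE x in M. t < m \<longrightarrow> Q t x"
      by (cases "t < m") (use assms in auto)
  qed
  then have "AE x in M. \<forall>t. t < m \<longrightarrow> Q t x" by (rule AE_all_countable[THEN iffD2])
  then show ?thesis by simp
qed

lemma even_odd_lims:
  fixes X :: "nat \<Rightarrow> real"
  assumes "X \<longlonglongrightarrow> L"
  shows "(\<lambda>n. X (2 * n)) \<longlonglongrightarrow> L" "(\<lambda>n. X (2 * n + 1)) \<longlonglongrightarrow> L"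
proof -
  have "strict_mono (\<lambda>n::nat. 2 * n)" "strict_mono (\<lambda>n::nat. 2 * n + 1)"
    by (auto simp: strict_mono_def)
  from LIMSEQ_subseq_LIMSEQ[OF assms this(1)] LIMSEQ_subseq_LIMSEQ[OF assms this(2)]
  show "(\<lambda>n. X (2 * n)) \<longlonglongrightarrow> L" "(\<lambda>n. X (2 * n + 1)) \<longlonglongrightarrow> L" by (simp_all add: comp_def)
qed

lemma alt_eq:
  fixes a b :: real
  assumes "convergent (\<lambda>n. if even n then a else b)"
  shows "a = b"
proof -
  from assms obtain L where L: "(\<lambda>n. if even n then a else b) \<longlonglongrightarrow> L" by (auto simp: convergent_def)
  from even_odd_lims[OF L] have "(\<lambda>n. a) \<longlonglongrightarrow> L" "(\<lambda>n. b) \<longlonglongrightarrow> L" by simp_all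
  then show ?thesis using LIMSEQ_unique LIMSEQ_const_iff by metis
qed

lemma alt_diff:
  fixes a b :: real and c :: "nat \<Rightarrow> real"
  assumes "convergent (\<lambda>n. (if even n then a else b) + c n)"
  shows "(\<lambda>n. c (2 * n) - c (2 * n + 1)) \<longlonglongrightarrow> b - a"
proof -
  from assms obtain L where L: "(\<lambda>n. (if even n then a else b) + c n) \<longlonglongrightarrow> L" by (auto simp: convergent_def)
  from even_odd_lims[OF L] have "(\<lambda>n. a + c (2 * n)) \<longlonglongrightarrow> L" "(\<lambda>n. b + c (2 * n + 1)) \<longlonglongrightarrow> L" by simp_all
  from tendsto_diff[OF this] have "(\<lambda>n. (a + c (2 * n)) - (b + c (2 * n + 1))) \<longlonglongrightarrow> 0" by simp
  from tendsto_add[OF this tendsto_const[of "b - a"]] show ?thesis by (simp add: algebra_simps)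
qed

theorem theorem3p1:
  fixes d T :: nat and P :: "(nat \<Rightarrow> nat \<Rightarrow> real) measure"
  assumes "d \<ge> 1" and "T \<ge> 2"
    and "prob_space P"
    and "sets P = sets (canon_space d T)"
    and "\<forall>t<T. \<forall>j<d. \<forall>c. marginal P t j \<noteq> return lborel c"
    and "\<forall>A\<in>sets P. emeasure P A = 0 \<longleftrightarrow> emeasure (marginal_product d T P) A = 0"
  shows "(\<forall>Vs V. (\<forall>n. semistatic d T P (Vs n)) \<and> V \<in> borel_measurable P \<and>
                 (AE x in P. (\<lambda>n. Vs n x) \<longlonglongrightarrow> V x) \<longrightarrow> semistatic d T P V)
       \<and> (\<forall>V hh gg hh' gg'. is_portfolio_position d T P V hh gg \<and> is_portfolio_position d T P V hh' gg' \<longrightarrow>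
            (\<forall>t<T - 1. \<forall>j<d. AE x in P. hh t j (restrict x {..t}) = hh' t j (restrict x {..t})) \<and>
            (\<exists>c :: nat \<Rightarrow> real. (\<Sum>j<d. c j) = 0 \<and>
               (\<forall>j<d. AE x in P. gg j (x (T - 1) j) = gg' j (x (T - 1) j) + c j)))
       \<and> (\<forall>Vs hhs ggs. (\<forall>n. semistatic d T P (Vs n) \<and> is_portfolio_position d T P (Vs n) (hhs n) (ggs n)) \<and>
                 (AE x in P. convergent (\<lambda>n. Vs n x)) \<longrightarrow>
            (\<exists>c :: nat \<Rightarrow> nat \<Rightarrow> real. (\<forall>n. (\<Sum>j<d. c n j) = 0) \<and>
               (\<forall>t<T - 1. \<forall>j<d. AE x in P. convergent (\<lambda>n. hhs n t j (restrict x {..t}))) \<and>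
               (\<forall>j<d. AE x in P. convergent (\<lambda>n. ggs n j (x (T - 1) j) + c n j))))"
proof -
  note P3 = part3[OF assms]
  have prP: "prob_space P" by fact
  have S3: "\<forall>Vs hhs ggs. (\<forall>n. semistatic d T P (Vs n) \<and> is_portfolio_position d T P (Vs n) (hhs n) (ggs n)) \<and>
                 (AE x in P. convergent (\<lambda>n. Vs n x)) \<longrightarrow>
            (\<exists>c :: nat \<Rightarrow> nat \<Rightarrow> real. (\<forall>n. (\<Sum>j<d. c n j) = 0) \<and>
               (\<forall>t<T - 1. \<forall>j<d. AE x in P. convergent (\<lambda>n. hhs n t j (restrict x {..t}))) \<and>
               (\<forall>j<d. AE x in P. convergent (\<lambda>n. ggs n j (x (T - 1) j) + c n j)))"
    using P3 by blast
  have S2: "\<forall>V hh gg hh' gg'. is_portfolio_position d T P V hh gg \<and> is_portfolio_position d T P V hh' gg' \<longrightarrow>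
            (\<forall>t<T - 1. \<forall>j<d. AE x in P. hh t j (restrict x {..t}) = hh' t j (restrict x {..t})) \<and>
            (\<exists>c :: nat \<Rightarrow> real. (\<Sum>j<d. c j) = 0 \<and>
               (\<forall>j<d. AE x in P. gg j (x (T - 1) j) = gg' j (x (T - 1) j) + c j))"
  proof (intro allI impI)
    fix V hh gg hh' gg'
    assume pp: "is_portfolio_position d T P V hh gg \<and> is_portfolio_position d T P V hh' gg'"
    define hs where "hs n = (if even n then hh else hh')" for n :: nat
    define gs where "gs n = (if even n then gg else gg')" for n :: nat
    have pos2: "\<forall>n. is_portfolio_position d T P ((\<lambda>n. V) n) (hs n) (gs n)"
      using pp by (auto simp: hs_def gs_def)
    have cv2: "AE x in P. convergent (\<lambda>n. (\<lambda>n. V) n x)" by (simp add: convergent_const)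
    from P3[OF pos2 cv2] obtain c where c0: "\<forall>n. (\<Sum>j<d. c n j) = 0"
      and ch: "\<forall>t<T - 1. \<forall>j<d. AE x in P. convergent (\<lambda>n. hs n t j (restrict x {..t}))"
      and cg: "\<forall>j<d. AE x in P. convergent (\<lambda>n. gs n j (x (T - 1) j) + c n j)"
      by blast
    have part_h: "\<forall>t<T - 1. \<forall>j<d. AE x in P. hh t j (restrict x {..t}) = hh' t j (restrict x {..t})"
    proof (intro allI impI)
      fix t j assume "t < T - 1" "j < d"
      with ch have "AE x in P. convergent (\<lambda>n. hs n t j (restrict x {..t}))" by blast
      then show "AE x in P. hh t j (restrict x {..t}) = hh' t j (restrict x {..t})"
      proof (rule eventually_mono)
        fix x assume "convergent (\<lambda>n. hs n t j (restrict x {..t}))"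
        moreover have "(\<lambda>n. hs n t j (restrict x {..t})) = (\<lambda>n. if even n then hh t j (restrict x {..t}) else hh' t j (restrict x {..t}))"
          by (auto simp: hs_def)
        ultimately show "hh t j (restrict x {..t}) = hh' t j (restrict x {..t})" using alt_eq by simp
      qed
    qed
    have gsx: "(\<lambda>n. gs n j y + c n j) = (\<lambda>n. (if even n then gg j y else gg' j y) + c n j)" for j y
      by (auto simp: gs_def)
    have aeg: "AE x in P. \<forall>j<d. convergent (\<lambda>n. gs n j (x (T - 1) j) + c n j)"
      using cg by (rule AE_ball_lessThan)
    obtain x0 where x0: "\<forall>j<d. convergent (\<lambda>n. gs n j (x0 (T - 1) j) + c n j)"
      using AE_exists[OF prP aeg] by blast
    have lim0: "(\<lambda>n. c (2 * n) j - c (2 * n + 1) j) \<longlonglongrightarrow> gg' j (x0 (T - 1) j) - gg j (x0 (T - 1) j)" if "j < d" for j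
    proof -
      have "convergent (\<lambda>n. gs n j (x0 (T - 1) j) + c n j)" using x0 that by blast
      then have "convergent (\<lambda>n. (if even n then gg j (x0 (T - 1) j) else gg' j (x0 (T - 1) j)) + c n j)"
        by (simp only: gsx)
      from alt_diff[OF this] show ?thesis .
    qed
    define C where "C j = gg j (x0 (T - 1) j) - gg' j (x0 (T - 1) j)" for j
    have "(\<lambda>n. \<Sum>j<d. c (2 * n) j - c (2 * n + 1) j) \<longlonglongrightarrow> (\<Sum>j<d. gg' j (x0 (T - 1) j) - gg j (x0 (T - 1) j))"
      by (rule tendsto_sum) (use lim0 in auto)
    moreover have "(\<lambda>n. \<Sum>j<d. c (2 * n) j - c (2 * n + 1) j) = (\<lambda>n. 0)"
      using c0 by (simp add: sum_subtractf)
    ultimately have "(\<Sum>j<d. gg' j (x0 (T - 1) j) - gg j (x0 (T - 1) j)) = 0"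
      using LIMSEQ_unique tendsto_const by metis
    then have sumC: "(\<Sum>j<d. C j) = 0" unfolding C_def by (simp add: sum_subtractf)
    have "\<forall>j<d. AE x in P. gg j (x (T - 1) j) = gg' j (x (T - 1) j) + C j"
    proof (intro allI impI)
      fix j assume j: "j < d"
      show "AE x in P. gg j (x (T - 1) j) = gg' j (x (T - 1) j) + C j"
        using cg j
      proof (elim allE impE)
        assume "AE x in P. convergent (\<lambda>n. gs n j (x (T - 1) j) + c n j)"
        then show ?thesis
        proof (rule eventually_mono)
          fix x assume "convergent (\<lambda>n. gs n j (x (T - 1) j) + c n j)"
          then have "convergent (\<lambda>n. (if even n then gg j (x (T - 1) j) else gg' j (x (T - 1) j)) + c n j)"
            by (simp only: gsx)
          from alt_diff[OF this]
          have "(\<lambda>n. c (2 * n) j - c (2 * n + 1) j) \<longlonglongrightarrow> gg' j (x (T - 1) j) - gg j (x (T - 1) j)" .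
          from LIMSEQ_unique[OF this lim0[OF j]]
          show "gg j (x (T - 1) j) = gg' j (x (T - 1) j) + C j" by (simp add: C_def algebra_simps)
        qed
      qed (use j in auto)
    qed
    with part_h sumC show "(\<forall>t<T - 1. \<forall>j<d. AE x in P. hh t j (restrict x {..t}) = hh' t j (restrict x {..t})) \<and>
            (\<exists>c :: nat \<Rightarrow> real. (\<Sum>j<d. c j) = 0 \<and>
               (\<forall>j<d. AE x in P. gg j (x (T - 1) j) = gg' j (x (T - 1) j) + c j))" by blast
  qed
  have S1: "\<forall>Vs V. (\<forall>n. semistatic d T P (Vs n)) \<and> V \<in> borel_measurable P \<and>
                 (AE x in P. (\<lambda>n. Vs n x) \<longlonglongrightarrow> V x) \<longrightarrow> semistatic d T P V"
  proof (intro allI impI)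
    fix Vs V assume a: "(\<forall>n. semistatic d T P (Vs n)) \<and> V \<in> borel_measurable P \<and> (AE x in P. (\<lambda>n. Vs n x) \<longlonglongrightarrow> V x)"
    have "\<forall>n. \<exists>hg. is_portfolio_position d T P (Vs n) (fst hg) (snd hg)"
      using a by (auto simp: semistatic_def)
    then obtain F where F: "\<forall>n. is_portfolio_position d T P (Vs n) (fst (F n)) (snd (F n))"
      by metis
    define hhs where "hhs n = fst (F n)" for n
    define ggs where "ggs n = snd (F n)" for n
    have pos: "\<forall>n. is_portfolio_position d T P (Vs n) (hhs n) (ggs n)" using F by (simp add: hhs_def ggs_def)
    have cv: "AE x in P. convergent (\<lambda>n. Vs n x)"
      using a by (auto elim!: eventually_mono simp: convergent_def)
    from part3[OF assms pos cv] obtain c where c0: "\<forall>n. (\<Sum>j<d. c n j) = 0"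
      and ch: "\<forall>t<T - 1. \<forall>j<d. AE x in P. convergent (\<lambda>n. hhs n t j (restrict x {..t}))"
      and cg: "\<forall>j<d. AE x in P. convergent (\<lambda>n. ggs n j (x (T - 1) j) + c n j)"
      by blast
    define hh where "hh t j z = lim (\<lambda>n. hhs n t j z)" for t j z
    define gg where "gg j u = lim (\<lambda>n. ggs n j u + c n j)" for j u
    have mh: "\<forall>t<T - 1. \<forall>j<d. hh t j \<in> borel_measurable (past_space d t)"
    proof (intro allI impI)
      fix t j assume "t < T - 1" "j < d"
      then have "\<And>n. hhs n t j \<in> borel_measurable (past_space d t)"
        using pos unfolding is_portfolio_position_def by blast
      then show "hh t j \<in> borel_measurable (past_space d t)"
        unfolding hh_def by (rule borel_measurable_lim_metric)
    qed
    have mg: "\<forall>j<d. gg j \<in> borel_measurable borel"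
    proof (intro allI impI)
      fix j assume "j < d"
      then have "\<And>n. ggs n j \<in> borel_measurable borel"
        using pos unfolding is_portfolio_position_def by blast
      then have "\<And>n. (\<lambda>u. ggs n j u + c n j) \<in> borel_measurable borel" by measurable
      then show "gg j \<in> borel_measurable borel"
        unfolding gg_def by (rule borel_measurable_lim_metric)
    qed
    have eqs: "AE x in P. \<forall>n. Vs n x = (\<Sum>t<T - 1. \<Sum>j<d. hhs n t j (restrict x {..t}) * (x (Suc t) j - x t j))
                        + (\<Sum>j<d. ggs n j (x (T - 1) j))"
      using pos unfolding is_portfolio_position_def by (intro AE_all_countable[THEN iffD2]) blast
    have aeh: "AE x in P. \<forall>t<T - 1. \<forall>j<d. convergent (\<lambda>n. hhs n t j (restrict x {..t}))"
      using ch by (intro AE_ball_lessThan allI impI) blast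
    have aeg: "AE x in P. \<forall>j<d. convergent (\<lambda>n. ggs n j (x (T - 1) j) + c n j)"
      using cg by (rule AE_ball_lessThan)
    have "AE x in P. V x = (\<Sum>t<T - 1. \<Sum>j<d. hh t j (restrict x {..t}) * (x (Suc t) j - x t j))
                        + (\<Sum>j<d. gg j (x (T - 1) j))"
      using a[THEN conjunct2, THEN conjunct2] eqs aeh aeg
    proof eventually_elim
      case (elim x)
      have e2: "Vs n x = (\<Sum>t<T - 1. \<Sum>j<d. hhs n t j (restrict x {..t}) * (x (Suc t) j - x t j))
                        + (\<Sum>j<d. ggs n j (x (T - 1) j) + c n j)" for n
        using elim(2) c0 by (simp add: sum.distrib)
      have "(\<lambda>n. (\<Sum>t<T - 1. \<Sum>j<d. hhs n t j (restrict x {..t}) * (x (Suc t) j - x t j))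
                        + (\<Sum>j<d. ggs n j (x (T - 1) j) + c n j)) \<longlonglongrightarrow>
            (\<Sum>t<T - 1. \<Sum>j<d. hh t j (restrict x {..t}) * (x (Suc t) j - x t j))
                        + (\<Sum>j<d. gg j (x (T - 1) j))"
        unfolding hh_def gg_def
        by (intro tendsto_add tendsto_sum tendsto_mult_right)
           (use elim(3,4) in \<open>auto simp: convergent_LIMSEQ_iff\<close>)
      then have "(\<lambda>n. Vs n x) \<longlonglongrightarrow> (\<Sum>t<T - 1. \<Sum>j<d. hh t j (restrict x {..t}) * (x (Suc t) j - x t j))
                        + (\<Sum>j<d. gg j (x (T - 1) j))" by (simp only: e2)
      from LIMSEQ_unique[OF elim(1) this] show ?case .
    qed
    with mh mg have "is_portfolio_position d T P V hh gg" unfolding is_portfolio_position_def by blast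
    with a show "semistatic d T P V" unfolding semistatic_def by blast
  qed
  from S1 S2 S3 show ?thesis by blast
qed

end
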